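(* Let $n$ be an odd natural number with $n\neq 2^k-1$ for all $k$. Then there exist positive integers $a,b$ such that $a$ and $b$ are odd, $2a+3b=n$, and $$\frac{n\,(a+b-1)!}{a!\,b!}\equiv 1\pmod 2.$$ *)

theory Defs
  imports Complex_Main
begin

end

theory Submission
  imports Defs
begin

lemma par_lemma:
  fixes x y A B K :: nat
  shows "x + y = K * 2 ^ v \<Longrightarrow> 0 < y \<Longrightarrow> y < 2 ^ v \<Longrightarrow> y * A = x * B \<Longrightarrow> (odd A \<longleftrightarrow> odd B)"
proof (induction v arbitrary: x y)
  case 0
  then show ?case by simp
next
  case (Suc v)
  show ?case
  proof (cases "odd y")
    case True
    have "even (x + y)" using Suc.prems(1) by simp
    then have "odd x" using True by simp
    then show ?thesis using True Suc.prems(4)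
      by (metis even_mult_iff)
  next
    case False
    have "even (x + y)" using Suc.prems(1) by simp
    then have ex: "even x" using False by simp
    obtain x' where x': "x = 2 * x'" using ex by blast
    obtain y' where y': "y = 2 * y'" using False by blast
    have "x' + y' = K * 2 ^ v" using Suc.prems(1) x' y' by simp
    moreover have "0 < y'" using Suc.prems(2) y' by simp
    moreover have "y' < 2 ^ v" using Suc.prems(3) y' by simp
    moreover have "y' * A = x' * B" using Suc.prems(4) x' y' by simp
    ultimately show ?thesis using Suc.IH by blast
  qed
qed

lemma binom_odd:
  fixes K v j :: nat
  assumes "0 < K"
  shows "j < 2 ^ v \<Longrightarrow> odd ((K * 2 ^ v - 1) choose j)"
proof (induction j)
  case 0
  then show ?case by simp
next
  case (Suc j)
  define N where "N = K * 2 ^ v - 1"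
  have le: "2 ^ v \<le> K * 2 ^ v" using assms by simp
  have pos: "(1::nat) \<le> 2 ^ v" by simp
  have NN: "N + 1 = K * 2 ^ v" unfolding N_def using le pos by linarith
  have jN: "j < N" unfolding N_def using Suc.prems le by linarith
  have eq: "Suc j * (N choose Suc j) = (N - j) * (N choose j)"
    by (metis binomial_absorption binomial_absorb_comp)
  have "(N - j) + Suc j = K * 2 ^ v" using NN jN by simp
  then have "odd (N choose Suc j) \<longleftrightarrow> odd (N choose j)"
    using par_lemma[of "N - j" "Suc j" K v "N choose Suc j" "N choose j"] Suc.prems eq by simp
  then show ?case using Suc.IH Suc.prems unfolding N_def by simp
qed

lemma odd_part_ex:
  fixes m :: nat
  shows "0 < m \<Longrightarrow> \<exists>v u. m = 2 ^ v * u \<and> odd u"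
proof (induction m rule: less_induct)
  case (less m)
  show ?case
  proof (cases "odd m")
    case True
    then show ?thesis by (rule_tac x=0 in exI) simp
  next
    case False
    then obtain m' where m': "m = 2 * m'" by blast
    then have "m' < m" "0 < m'" using less.prems by auto
    then obtain v u where "m' = 2 ^ v * u" "odd u" using less.IH by blast
    then show ?thesis using m' by (rule_tac x="Suc v" in exI) auto
  qed
qed

theorem lemma6p5:
  fixes n :: nat
  assumes "odd n"
    and "\<forall>k::nat. n \<noteq> 2 ^ k - 1"
  shows "\<exists>a b :: nat. a > 0 \<and> b > 0 \<and> odd a \<and> odd b \<and> 2 * a + 3 * b = n \<and>
           (\<exists>m :: int. odd m \<and>
              (of_nat n * fact (a + b - 1) / (fact a * fact b) :: rat) = of_int m)"
proof -
  obtain v u where vu: "n + 1 = 2 ^ v * u" "odd u" using odd_part_ex[of "n+1"] by auto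
  have "v \<noteq> 0" using vu assms(1) by (cases v) auto
  then have v1: "1 \<le> v" by simp
  have "u \<noteq> 1" using vu assms(2) by (metis add_diff_cancel_right' mult.right_neutral)
  moreover have "u \<noteq> 0" using vu(2) by (metis odd_pos less_irrefl)
  ultimately have "u \<ge> 3" using vu(2) by (metis One_nat_def Suc_1 Suc_leI dvd_refl le_neq_implies_less not_less_eq_eq numeral_3_eq_3 odd_pos)
  then obtain w where w: "u = 2 * w + 3"
  proof -
    obtain t where t: "u = 2 * t + 1" using vu(2) oddE by blast
    then have "t \<ge> 1" using \<open>u \<ge> 3\<close> by simp
    then show ?thesis using t that[of "t - 1"] by simp
  qed
  define a where "a = 2 ^ v * w + 1"
  define b where "b = 2 ^ v - (1::nat)"
  have p2: "2 \<le> (2::nat) ^ v" using v1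
    by (metis power_increasing power_one_right zero_less_numeral one_le_numeral)
  have "even ((2::nat) ^ v)" using v1 by simp
  then have ob: "odd b" unfolding b_def using p2 by (simp add: even_diff_nat)
  have bpos: "b > 0" unfolding b_def using p2 by simp
  have oa: "odd a" unfolding a_def using v1 by simp
  have apos: "a > 0" unfolding a_def by simp
  have nab: "2 * a + 3 * b = n"
  proof -
    have "n + 1 = 2 ^ v * (2 * w + 3)" using vu w by simp
    then show ?thesis unfolding a_def b_def using p2 by (simp add: algebra_simps)
  qed
  define s where "s = a + b - 1"
  have sa: "s - a = b - 1" "s - (b - 1) = a" unfolding s_def using bpos by auto
  have sb: "s - b = a - 1" unfolding s_def using apos by auto
  have s2: "s = (w + 1) * 2 ^ v - 1" unfolding s_def a_def b_def using p2 by (simp add: algebra_simps)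
  have bs: "b \<le> s" unfolding s_def using apos by linarith
  have as: "a \<le> s" unfolding s_def using bpos by linarith
  have f1: "fact b * fact (a - 1) * (s choose b) = (fact s :: nat)"
    using binomial_fact_lemma[OF bs] unfolding sb .
  have f2: "fact a * fact (b - 1) * (s choose a) = (fact s :: nat)"
    using binomial_fact_lemma[OF as] unfolding sa .
  have fa: "fact a = a * (fact (a - 1) :: nat)" using fact_reduce[OF apos, where 'a=nat] by simp
  have fb: "fact b = b * (fact (b - 1) :: nat)" using fact_reduce[OF bpos, where 'a=nat] by simp
  define M where "M = 2 * (s choose b) + 3 * (s choose a)"
  have key: "n * fact s = M * (fact a * fact b)"
  proof -
    have "M * (fact a * fact b) = 2 * (a * (fact b * fact (a - 1) * (s choose b)))
       + 3 * (b * (fact a * fact (b - 1) * (s choose a)))"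
      unfolding M_def by (simp only: fa fb) (simp add: algebra_simps)
    also have "\<dots> = (2 * a + 3 * b) * fact s" using f1 f2 by (simp add: algebra_simps)
    finally show ?thesis using nab by simp
  qed
  have "(s choose a) = (s choose (b - 1))"
    using binomial_symmetric[OF as] unfolding sa .
  moreover have "odd (s choose (b - 1))"
  proof -
    have "b - 1 < 2 ^ v" unfolding b_def by simp
    then have "odd (((w + 1) * 2 ^ v - 1) choose (b - 1))" by (intro binom_odd) simp_all
    then show ?thesis unfolding s2 .
  qed
  ultimately have oM: "odd M" unfolding M_def by simp
  have "(of_nat n * fact s / (fact a * fact b) :: rat) = of_nat M"
  proof -
    have "(of_nat n * fact s :: rat) = of_nat M * (fact a * fact b)"
      using arg_cong[OF key, of "of_nat :: nat \<Rightarrow> rat"] by (simp add: of_nat_mult)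
    then show ?thesis by (simp add: field_simps)
  qed
  then show ?thesis using apos bpos oa ob nab oM unfolding s_def
    by (rule_tac x=a in exI, rule_tac x=b in exI) (auto intro!: exI[of _ "int M"])
qed

end
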